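(* In the setting $X = qA + E_X$, $H = bA + E_H$, $Y = cX + dH + E_Y$ with $A, E_X, E_H, E_Y$ mutually independent, $A$ having a density, $c\neq 0$, $qc+bd\ne 0$, $E:=E_Y+dE_H$, and $\widehat{Y}=\alpha A+\beta X$ with $\beta\neq 0$, suppose $E_X\sim\mathcal{N}(\mu_1,\sigma_{E_X}^2)$ and $E\sim\mathcal{N}(\mu_2,\sigma_E^2)$ are Gaussian with positive variances ($A$ need not be Gaussian). Then $\widehat{Y}\perp A\mid Y$ if and only if $$\frac{\alpha}{\beta}=\frac{bdc\,\sigma_{E_X}^2 - q\,\sigma_E^2}{c^2\sigma_{E_X}^2+\sigma_E^2}.$$
   Context: $U\perp V\mid W$ denotes conditional independence of $U$ and $V$ given $W$. $H$ is an unobserved variable; $q,b,c,d,\alpha,\beta$ are real constants. *)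

theory Defs
  imports "HOL-Probability.Probability"
begin

definition cond_indep_given ::
  "'a measure \<Rightarrow> ('a \<Rightarrow> real) \<Rightarrow> ('a \<Rightarrow> real) \<Rightarrow> ('a \<Rightarrow> real) \<Rightarrow> bool" where
  "cond_indep_given M U V W \<longleftrightarrow>
     (\<forall>S \<in> sets borel. \<forall>T \<in> sets borel.
        AE \<omega> in M.
          real_cond_exp M (vimage_algebra (space M) W borel)
             (\<lambda>x. indicator S (U x) * indicator T (V x)) \<omega>
          = real_cond_exp M (vimage_algebra (space M) W borel) (\<lambda>x. indicator S (U x)) \<omega>
            * real_cond_exp M (vimage_algebra (space M) W borel) (\<lambda>x. indicator T (V x)) \<omega>)"

end

theory Submission
  imports Defs
begin


lemma expo_id:
  fixes l c \<sigma>1 \<sigma>2 \<mu>1 \<mu>2 u v :: real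
  assumes pos: "\<sigma>1 > 0" "\<sigma>2 > 0" and lam: "l * \<sigma>2\<^sup>2 = (1 - l*c) * c * \<sigma>1\<^sup>2"
  defines "e \<equiv> \<lambda>uu vv. - ((l* vv+uu-\<mu>1)\<^sup>2/(2*\<sigma>1\<^sup>2)) - (vv - c*(l* vv+uu) - \<mu>2)\<^sup>2/(2*\<sigma>2\<^sup>2)"
  shows "e u v + e 0 0 = e u 0 + e 0 v"
proof -
  have "e u v + e 0 0 - e u 0 - e 0 v = u * v * ((1-l*c)*c*\<sigma>1\<^sup>2 - l*\<sigma>2\<^sup>2)/(\<sigma>1\<^sup>2*\<sigma>2\<^sup>2)"
    unfolding e_def using pos by (simp add: field_simps power2_eq_square)
  then show ?thesis using lam by simp
qed

lemma Q_id:
  fixes l c \<sigma>1 \<sigma>2 \<mu>1 \<mu>2 u v :: real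
  assumes pos: "\<sigma>1 > 0" "\<sigma>2 > 0" and lam: "l * \<sigma>2\<^sup>2 = (1 - l*c) * c * \<sigma>1\<^sup>2"
  defines "Q \<equiv> \<lambda>uu vv. normal_density \<mu>1 \<sigma>1 (l* vv+uu) * normal_density \<mu>2 \<sigma>2 (vv - c*(l* vv+uu))"
  shows "Q u v * Q 0 0 = Q u 0 * Q 0 v"
proof -
  define e where "e \<equiv> \<lambda>uu vv. - ((l* vv+uu-\<mu>1)\<^sup>2/(2*\<sigma>1\<^sup>2)) - (vv - c*(l* vv+uu) - \<mu>2)\<^sup>2/(2*\<sigma>2\<^sup>2)"
  define K where "K = 1 / sqrt (2 * pi * \<sigma>1\<^sup>2) * (1 / sqrt (2 * pi * \<sigma>2\<^sup>2))"
  have Qe: "Q u v = K * exp (e u v)" for u v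
    unfolding Q_def e_def K_def normal_density_def by (simp add: exp_diff exp_minus field_simps)
  have "e u v + e 0 0 = e u 0 + e 0 v" unfolding e_def by (rule expo_id[OF pos lam])
  then have "exp (e u v) * exp (e 0 0) = exp (e u 0) * exp (e 0 v)" by (simp flip: exp_add)
  then show ?thesis unfolding Qe by (simp add: algebra_simps)
qed
context prob_space begin

lemma indep2_density:
  fixes X Y :: "'a \<Rightarrow> real" and h :: "real \<times> real \<Rightarrow> ennreal"
  assumes ind: "indep_var borel X borel Y"
    and dX: "distributed M lborel X f" and dY: "distributed M lborel Y g"
    and h[measurable]: "h \<in> borel_measurable (borel \<Otimes>\<^sub>M borel)"
  shows "(\<integral>\<^sup>+\<omega>. h (X \<omega>, Y \<omega>) \<partial>M) = (\<integral>\<^sup>+x. f x * (\<integral>\<^sup>+y. g y * h (x, y) \<partial>lborel) \<partial>lborel)"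
proof -
  have rv: "random_variable borel X" "random_variable borel Y"
    using ind by (auto dest: indep_var_rv1 indep_var_rv2)
  note [measurable] = rv
  have fm[measurable]: "f \<in> borel_measurable borel" "g \<in> borel_measurable borel"
    using dX dY by (auto simp: distributed_def)
  have eq: "distr M (borel \<Otimes>\<^sub>M borel) (\<lambda>x. (X x, Y x)) = distr M borel X \<Otimes>\<^sub>M distr M borel Y"
    using ind by (simp add: indep_var_distribution_eq)
  have dX': "distr M borel X = density lborel f"
    using dX unfolding distributed_def by (metis distr_cong sets_lborel)
  have dY': "distr M borel Y = density lborel g"
    using dY unfolding distributed_def by (metis distr_cong sets_lborel)
  interpret PX: prob_space "distr M borel X" by (rule prob_space_distr) simp
  interpret PY: prob_space "distr M borel Y" by (rule prob_space_distr) simp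
  interpret PP: pair_sigma_finite "distr M borel X" "distr M borel Y" ..
  have "(\<integral>\<^sup>+\<omega>. h (X \<omega>, Y \<omega>) \<partial>M) = (\<integral>\<^sup>+z. h z \<partial>distr M (borel \<Otimes>\<^sub>M borel) (\<lambda>x. (X x, Y x)))"
    by (subst nn_integral_distr) auto
  also have "\<dots> = (\<integral>\<^sup>+z. h z \<partial>(distr M borel X \<Otimes>\<^sub>M distr M borel Y))" by (simp add: eq)
  also have "\<dots> = (\<integral>\<^sup>+x. \<integral>\<^sup>+y. h (x, y) \<partial>distr M borel Y \<partial>distr M borel X)"
    by (subst PY.nn_integral_fst[symmetric]) (auto)
  also have "\<dots> = (\<integral>\<^sup>+x. f x * (\<integral>\<^sup>+y. g y * h (x, y) \<partial>lborel) \<partial>lborel)"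
    unfolding dX' dY' by (subst nn_integral_density, measurable, subst nn_integral_density) auto
  finally show ?thesis .
qed

end

context prob_space begin

lemma emeasure_ind_int:
  assumes [measurable]: "h \<in> measurable M N" "A \<in> sets N"
  shows "emeasure M (h -` A \<inter> space M) = (\<integral>\<^sup>+\<omega>. indicator A (h \<omega>) \<partial>M)"
proof -
  have "emeasure M (h -` A \<inter> space M) = (\<integral>\<^sup>+\<omega>. indicator (h -` A \<inter> space M) \<omega> \<partial>M)"
    by (subst nn_integral_indicator) auto
  also have "\<dots> = (\<integral>\<^sup>+\<omega>. indicator A (h \<omega>) \<partial>M)"
    by (rule nn_integral_cong) (auto simp: indicator_def)
  finally show ?thesis .
qed

lemma gauss_indep:
  fixes X E :: "'a \<Rightarrow> real" and c l \<mu>1 \<mu>2 \<sigma>1 \<sigma>2 :: real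
  assumes ind: "indep_var borel X borel E"
    and nX: "distributed M lborel X (\<lambda>x. ennreal (normal_density \<mu>1 \<sigma>1 x))"
    and nE: "distributed M lborel E (\<lambda>x. ennreal (normal_density \<mu>2 \<sigma>2 x))"
    and pos: "\<sigma>1 > 0" "\<sigma>2 > 0" and lam: "l * \<sigma>2\<^sup>2 = (1 - l*c) * c * \<sigma>1\<^sup>2"
  shows "indep_var borel (\<lambda>\<omega>. c * X \<omega> + E \<omega>) borel (\<lambda>\<omega>. (1 - l*c) * X \<omega> - l * E \<omega>)"
proof -
  have rv[measurable]: "random_variable borel X" "random_variable borel E"
    using ind by (auto dest: indep_var_rv1 indep_var_rv2)
  define n1 where "n1 = normal_density \<mu>1 \<sigma>1"
  define n2 where "n2 = normal_density \<mu>2 \<sigma>2"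
  have n_meas[measurable]: "n1 \<in> borel_measurable borel" "n2 \<in> borel_measurable borel"
    unfolding n1_def n2_def by auto
  have n_nn[simp]: "n1 x \<ge> 0" "n2 x \<ge> 0" for x unfolding n1_def n2_def by auto
  define Q where "Q \<equiv> \<lambda>uu vv. n1 (l * vv + uu) * n2 (vv - c * (l * vv + uu))"
  define f where "f u = Q u 0" for u
  define g where "g v = Q 0 v / Q 0 0" for v
  have [measurable]: "f \<in> borel_measurable borel" "g \<in> borel_measurable borel"
    unfolding f_def g_def Q_def by measurable
  have Q00: "Q 0 0 > 0" unfolding Q_def n1_def n2_def using pos by (simp add: normal_density_pos)
  have Qfg: "Q u v = f u * g v" for u v
  proof -
    have "Q u v * Q 0 0 = Q u 0 * Q 0 v" unfolding Q_def n1_def n2_def by (rule Q_id[OF pos lam])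
    then show ?thesis using Q00 unfolding f_def g_def by (simp add: field_simps)
  qed
  have fg_nn: "f u \<ge> 0" "g v \<ge> 0" for u v
    unfolding f_def g_def Q_def using Q00 by auto
  define FU where "FU U = (\<integral>\<^sup>+u. ennreal (f u) * indicator U u \<partial>lborel)" for U :: "real set"
  define GV where "GV V = (\<integral>\<^sup>+v. ennreal (g v) * indicator V v \<partial>lborel)" for V :: "real set"
  define S where "S = (\<lambda>\<omega>. c * X \<omega> + E \<omega>)"
  define R where "R = (\<lambda>\<omega>. (1 - l*c) * X \<omega> - l * E \<omega>)"
  have SR[measurable]: "random_variable borel S" "random_variable borel R"
    unfolding S_def R_def by measurable
  have key: "(\<integral>\<^sup>+\<omega>. indicator V (S \<omega>) * indicator U (R \<omega>) \<partial>M) = FU U * GV V"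
    if [measurable]: "V \<in> sets borel" "U \<in> sets borel" for V U
  proof -
    have "(\<integral>\<^sup>+\<omega>. indicator V (S \<omega>) * indicator U (R \<omega>) \<partial>M)
      = (\<integral>\<^sup>+\<omega>. (\<lambda>(x,e). indicator V (c * x + e) * indicator U ((1 - l*c) * x - l * e)) (X \<omega>, E \<omega>) \<partial>M)"
      unfolding S_def R_def by simp
    also have "\<dots> = (\<integral>\<^sup>+x. ennreal (n1 x) * (\<integral>\<^sup>+e. ennreal (n2 e) * (indicator V (c * x + e) * indicator U ((1 - l*c) * x - l * e)) \<partial>lborel) \<partial>lborel)"
      by (subst indep2_density[OF ind nX nE]) (auto simp: n1_def n2_def)
    also have "\<dots> = (\<integral>\<^sup>+x. ennreal (n1 x) * (\<integral>\<^sup>+v. ennreal (n2 (v - c * x)) * (indicator V v * indicator U (x - l * v)) \<partial>lborel) \<partial>lborel)"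
    proof (rule nn_integral_cong)
      fix x :: real
      have "(\<integral>\<^sup>+e. ennreal (n2 e) * (indicator V (c * x + e) * indicator U ((1 - l*c) * x - l * e)) \<partial>lborel)
        = (\<integral>\<^sup>+v. ennreal (n2 (v - c * x)) * (indicator V v * indicator U (x - l * v)) \<partial>lborel)"
        using nn_integral_real_affine[where c=1 and t="-c*x" and f="\<lambda>e. ennreal (n2 e) * (indicator V (c * x + e) * indicator U ((1 - l*c) * x - l * e))"]
        by (simp add: algebra_simps)
      then show "ennreal (n1 x) * (\<integral>\<^sup>+e. ennreal (n2 e) * (indicator V (c * x + e) * indicator U ((1 - l*c) * x - l * e)) \<partial>lborel)
         = ennreal (n1 x) * (\<integral>\<^sup>+v. ennreal (n2 (v - c * x)) * (indicator V v * indicator U (x - l * v)) \<partial>lborel)" by simp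
    qed
    also have "\<dots> = (\<integral>\<^sup>+x. \<integral>\<^sup>+v. ennreal (n1 x) * (ennreal (n2 (v - c * x)) * (indicator V v * indicator U (x - l * v))) \<partial>lborel \<partial>lborel)"
      by (rule nn_integral_cong) (simp add: nn_integral_cmult)
    also have "\<dots> = (\<integral>\<^sup>+v. \<integral>\<^sup>+x. ennreal (n1 x) * (ennreal (n2 (v - c * x)) * (indicator V v * indicator U (x - l * v))) \<partial>lborel \<partial>lborel)"
      by (rule lborel_pair.Fubini'[symmetric]) measurable
    also have "\<dots> = (\<integral>\<^sup>+v. \<integral>\<^sup>+u. (ennreal (g v) * indicator V v) * (ennreal (f u) * indicator U u) \<partial>lborel \<partial>lborel)"
    proof (rule nn_integral_cong)
      fix v :: real
      have "(\<integral>\<^sup>+x. ennreal (n1 x) * (ennreal (n2 (v - c * x)) * (indicator V v * indicator U (x - l * v))) \<partial>lborel)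
        = (\<integral>\<^sup>+u. ennreal (n1 (l * v + 1 * u)) * (ennreal (n2 (v - c * (l * v + 1 * u))) * (indicator V v * indicator U ((l * v + 1 * u) - l * v))) \<partial>lborel)"
        using nn_integral_real_affine[where c=1 and t="l * v" and f="\<lambda>x. ennreal (n1 x) * (ennreal (n2 (v - c * x)) * (indicator V v * indicator U (x - l * v)))"]
        by simp
      also have "\<dots> = (\<integral>\<^sup>+u. (ennreal (g v) * indicator V v) * (ennreal (f u) * indicator U u) \<partial>lborel)"
      proof (rule nn_integral_cong)
        fix u :: real
        have "ennreal (n1 (l * v + u)) * ennreal (n2 (v - c * (l * v + u))) = ennreal (Q u v)"
          unfolding Q_def by (simp add: ennreal_mult)
        also have "\<dots> = ennreal (f u) * ennreal (g v)" using fg_nn by (simp add: Qfg ennreal_mult)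
        finally show "ennreal (n1 (l * v + 1 * u)) * (ennreal (n2 (v - c * (l * v + 1 * u))) * (indicator V v * indicator U ((l * v + 1 * u) - l * v)))
          = (ennreal (g v) * indicator V v) * (ennreal (f u) * indicator U u)"
          by (simp add: ac_simps)
      qed
      finally show "(\<integral>\<^sup>+x. ennreal (n1 x) * (ennreal (n2 (v - c * x)) * (indicator V v * indicator U (x - l * v))) \<partial>lborel)
        = (\<integral>\<^sup>+u. (ennreal (g v) * indicator V v) * (ennreal (f u) * indicator U u) \<partial>lborel)" .
    qed
    also have "\<dots> = (\<integral>\<^sup>+v. (ennreal (g v) * indicator V v) * FU U \<partial>lborel)"
      unfolding FU_def by (rule nn_integral_cong) (simp add: nn_integral_cmult)
    also have "\<dots> = FU U * GV V"
      unfolding GV_def by (subst nn_integral_cmult[symmetric]) (auto simp: ac_simps intro!: nn_integral_cong)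
    finally show ?thesis .
  qed
  define J where "J V U = (\<integral>\<^sup>+\<omega>. indicator V (S \<omega>) * indicator U (R \<omega>) \<partial>M)" for V U :: "real set"
  have one: "FU UNIV * GV UNIV = 1"
  proof -
    have "FU UNIV * GV UNIV = (\<integral>\<^sup>+\<omega>. 1 \<partial>M)" using key[of UNIV UNIV] by simp
    also have "\<dots> = 1" using emeasure_space_1 by simp
    finally show ?thesis .
  qed
  have "distr M borel S \<Otimes>\<^sub>M distr M borel R = distr M (borel \<Otimes>\<^sub>M borel) (\<lambda>x. (S x, R x))"
  proof (rule pair_measure_eqI)
    show "sigma_finite_measure (distr M borel S)" "sigma_finite_measure (distr M borel R)"
      by (auto intro!: prob_space_imp_sigma_finite prob_space_distr)
    show "sets (distr M borel S \<Otimes>\<^sub>M distr M borel R) = sets (distr M (borel \<Otimes>\<^sub>M borel) (\<lambda>x. (S x, R x)))"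
      by simp
  next
    fix A B assume A: "A \<in> sets (distr M borel S)" and B: "B \<in> sets (distr M borel R)"
    then have [measurable]: "A \<in> sets borel" "B \<in> sets borel" by auto
    have e1: "emeasure (distr M borel S) A = FU UNIV * GV A"
      using key[of A UNIV] emeasure_ind_int[of S borel A] by (simp add: emeasure_distr)
    have e2: "emeasure (distr M borel R) B = FU B * GV UNIV"
      using key[of UNIV B] emeasure_ind_int[of R borel B] by (simp add: emeasure_distr)
    have "emeasure (distr M (borel \<Otimes>\<^sub>M borel) (\<lambda>x. (S x, R x))) (A \<times> B)
        = (\<integral>\<^sup>+\<omega>. indicator (A \<times> B) (S \<omega>, R \<omega>) \<partial>M)"
      using emeasure_ind_int[of "\<lambda>x. (S x, R x)" "borel \<Otimes>\<^sub>M borel" "A \<times> B"] by (simp add: emeasure_distr)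
    also have "\<dots> = FU B * GV A" using key[of A B] by (simp add: indicator_times)
    finally have e3: "emeasure (distr M (borel \<Otimes>\<^sub>M borel) (\<lambda>x. (S x, R x))) (A \<times> B) = FU B * GV A" .
    have "FU UNIV * GV A * (FU B * GV UNIV) = FU B * GV A * (FU UNIV * GV UNIV)"
      by (simp add: ac_simps)
    then show "emeasure (distr M borel S) A * emeasure (distr M borel R) B
      = emeasure (distr M (borel \<Otimes>\<^sub>M borel) (\<lambda>x. (S x, R x))) (A \<times> B)"
      unfolding e1 e2 e3 one by simp
  qed
  then show ?thesis unfolding S_def[symmetric] R_def[symmetric]
    by (subst indep_var_distribution_eq) auto
qed

end

locale cisetup = prob_space +
  fixes A XE E :: "'a \<Rightarrow> real" and fA :: "real \<Rightarrow> ennreal" and \<mu>1 \<mu>2 \<sigma>1 \<sigma>2 c :: real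
  assumes indAE: "prob_space.indep_var M (borel \<Otimes>\<^sub>M borel) (\<lambda>\<omega>. (A \<omega>, 0::real)) (borel \<Otimes>\<^sub>M borel) (\<lambda>\<omega>. (XE \<omega>, E \<omega>))"
    and indXE: "prob_space.indep_var M borel XE borel E"
    and nX: "distributed M lborel XE (\<lambda>x. ennreal (normal_density \<mu>1 \<sigma>1 x))"
    and nE: "distributed M lborel E (\<lambda>x. ennreal (normal_density \<mu>2 \<sigma>2 x))"
    and pos1: "\<sigma>1 > 0" and pos2: "\<sigma>2 > 0" and c_nz: "c \<noteq> 0"
    and A_dens: "distributed M lborel A fA"
begin

definition "DD = c\<^sup>2 * \<sigma>1\<^sup>2 + \<sigma>2\<^sup>2"
definition "l = c * \<sigma>1\<^sup>2 / DD"
definition "S = (\<lambda>\<omega>. c * XE \<omega> + E \<omega>)"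
definition "R = (\<lambda>\<omega>. (1 - l * c) * XE \<omega> - l * E \<omega>)"

lemma DD_pos: "DD > 0" unfolding DD_def using pos1 pos2 by (simp add: add_nonneg_pos)

lemma lam: "l * \<sigma>2\<^sup>2 = (1 - l*c) * c * \<sigma>1\<^sup>2"
  using DD_pos unfolding l_def by (simp add: field_simps DD_def power2_eq_square)

lemma l_nz: "l \<noteq> 0" using DD_pos c_nz pos1 unfolding l_def by simp

lemma one_lc_nz: "1 - l * c \<noteq> 0"
proof -
  have "1 - l * c = \<sigma>2\<^sup>2 / DD" using DD_pos unfolding l_def by (simp add: field_simps DD_def power2_eq_square)
  then show ?thesis using DD_pos pos2 by simp
qed

lemma rvs0: "(\<lambda>\<omega>. (A \<omega>, 0::real)) \<in> measurable M (borel \<Otimes>\<^sub>M borel)" "XE \<in> borel_measurable M" "E \<in> borel_measurable M"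
  using indAE indXE by (auto dest: indep_var_rv1 indep_var_rv2)

lemma rvs[measurable]: "A \<in> borel_measurable M" "XE \<in> borel_measurable M" "E \<in> borel_measurable M"
proof -
  have "fst \<circ> (\<lambda>\<omega>. (A \<omega>, 0::real)) \<in> borel_measurable M"
    by (rule measurable_comp[OF rvs0(1)]) (rule measurable_fst)
  then show "A \<in> borel_measurable M" by (simp add: comp_def)
qed (use rvs0 in auto)

lemma rvSR[measurable]: "S \<in> borel_measurable M" "R \<in> borel_measurable M"
  unfolding S_def R_def by measurable

lemma indSR: "indep_var borel S borel R"
  unfolding S_def R_def by (rule gauss_indep[OF indXE nX nE pos1 pos2 lam])

lemma indA_SR: "indep_var (borel \<Otimes>\<^sub>M borel) (\<lambda>\<omega>. (A \<omega>, 0::real)) (borel \<Otimes>\<^sub>M borel) (\<lambda>\<omega>. (S \<omega>, R \<omega>))"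
proof -
  have "indep_var (borel \<Otimes>\<^sub>M borel) (id \<circ> (\<lambda>\<omega>. (A \<omega>, 0::real))) (borel \<Otimes>\<^sub>M borel) ((\<lambda>(x,e). (c * x + e, (1 - l * c) * x - l * e)) \<circ> (\<lambda>\<omega>. (XE \<omega>, E \<omega>)))"
    by (rule indep_var_compose[OF indAE]) auto
  then show ?thesis by (simp add: comp_def S_def R_def)
qed

abbreviation "\<mu>A \<equiv> distr M borel A"
abbreviation "\<mu>S \<equiv> distr M borel S"
abbreviation "\<mu>R \<equiv> distr M borel R"

lemma probs: "prob_space \<mu>A" "prob_space \<mu>S" "prob_space \<mu>R"
  by (auto intro!: prob_space_distr)

lemma triple:
  assumes g[measurable]: "g \<in> borel_measurable (borel \<Otimes>\<^sub>M (borel \<Otimes>\<^sub>M borel))"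
  shows "(\<integral>\<^sup>+\<omega>. g (A \<omega>, S \<omega>, R \<omega>) \<partial>M) = (\<integral>\<^sup>+a. \<integral>\<^sup>+s. \<integral>\<^sup>+r. g (a, s, r) \<partial>\<mu>R \<partial>\<mu>S \<partial>\<mu>A)"
proof -
  let ?A0 = "distr M (borel \<Otimes>\<^sub>M borel) (\<lambda>\<omega>. (A \<omega>, 0::real))"
  interpret PA: prob_space ?A0 by (rule prob_space_distr) simp
  interpret PS: prob_space \<mu>S by (rule probs)
  interpret PR: prob_space \<mu>R by (rule probs)
  interpret PSR: pair_sigma_finite \<mu>S \<mu>R ..
  interpret PSR': prob_space "\<mu>S \<Otimes>\<^sub>M \<mu>R" by (rule prob_space_pair) unfold_locales
  interpret PASR: pair_sigma_finite ?A0 "\<mu>S \<Otimes>\<^sub>M \<mu>R" ..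
  have sf: "sigma_finite_measure (\<mu>S \<Otimes>\<^sub>M \<mu>R)"
    by (rule prob_space_imp_sigma_finite) (rule PSR'.prob_space_axioms)
  have e1: "distr M (borel \<Otimes>\<^sub>M borel) (\<lambda>x. (S x, R x)) = \<mu>S \<Otimes>\<^sub>M \<mu>R"
    using indSR by (simp add: indep_var_distribution_eq)
  have e2: "distr M ((borel \<Otimes>\<^sub>M borel) \<Otimes>\<^sub>M (borel \<Otimes>\<^sub>M borel)) (\<lambda>x. ((A x, 0::real), (S x, R x))) = ?A0 \<Otimes>\<^sub>M distr M (borel \<Otimes>\<^sub>M borel) (\<lambda>x. (S x, R x))"
    using indA_SR by (simp add: indep_var_distribution_eq)
  define H where "H a = (\<integral>\<^sup>+s. \<integral>\<^sup>+r. g (a, s, r) \<partial>\<mu>R \<partial>\<mu>S)" for a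
  have Hm[measurable]: "H \<in> borel_measurable borel" unfolding H_def by measurable
  have "(\<integral>\<^sup>+\<omega>. g (A \<omega>, S \<omega>, R \<omega>) \<partial>M) = (\<integral>\<^sup>+z. g (fst (fst z), snd z) \<partial>distr M ((borel \<Otimes>\<^sub>M borel) \<Otimes>\<^sub>M (borel \<Otimes>\<^sub>M borel)) (\<lambda>x. ((A x, 0::real), (S x, R x))))"
    by (subst nn_integral_distr) auto
  also have "\<dots> = (\<integral>\<^sup>+z. g (fst (fst z), snd z) \<partial>(?A0 \<Otimes>\<^sub>M (\<mu>S \<Otimes>\<^sub>M \<mu>R)))" by (simp add: e1 e2)
  also have "\<dots> = (\<integral>\<^sup>+p. \<integral>\<^sup>+y. g (fst p, y) \<partial>(\<mu>S \<Otimes>\<^sub>M \<mu>R) \<partial>?A0)"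
    by (subst sigma_finite_measure.nn_integral_fst[OF sf, symmetric]) auto
  also have "\<dots> = (\<integral>\<^sup>+p. H (fst p) \<partial>?A0)"
    unfolding H_def by (rule nn_integral_cong, subst PR.nn_integral_fst[symmetric]) auto
  also have "\<dots> = (\<integral>\<^sup>+\<omega>. H (A \<omega>) \<partial>M)"
    by (subst nn_integral_distr) auto
  also have "\<dots> = (\<integral>\<^sup>+a. H a \<partial>\<mu>A)"
    by (subst nn_integral_distr) auto
  finally show ?thesis unfolding H_def .
qed

end

locale cisetup2 = cisetup +
  fixes k \<beta> \<gamma> :: real
  assumes beta_nz: "\<beta> \<noteq> 0"
begin

definition "Y = (\<lambda>\<omega>. k * A \<omega> + S \<omega>)"
definition "Yh = (\<lambda>\<omega>. \<beta> * l * Y \<omega> + \<gamma> * A \<omega> + \<beta> * R \<omega>)"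
abbreviation "FF \<equiv> vimage_algebra (space M) Y borel"
definition "\<psi>n Ss y a = (\<integral>\<^sup>+r. indicator Ss (\<beta> * l * y + \<gamma> * a + \<beta> * r) \<partial>\<mu>R)"
definition "\<psi> Ss y a = enn2real (\<psi>n Ss y a)"

lemma rvY[measurable]: "Y \<in> borel_measurable M" "Yh \<in> borel_measurable M"
  unfolding Y_def Yh_def by measurable

lemma \<psi>n_meas[measurable]:
  assumes [measurable]: "Ss \<in> sets borel"
  shows "(\<lambda>p. \<psi>n Ss (fst p) (snd p)) \<in> borel_measurable (borel \<Otimes>\<^sub>M borel)"
proof -
  interpret PR: prob_space \<mu>R by (rule probs)
  have "(\<lambda>p. \<integral>\<^sup>+r. indicator Ss (\<beta> * l * fst p + \<gamma> * snd p + \<beta> * r) \<partial>\<mu>R) \<in> borel_measurable (borel \<Otimes>\<^sub>M borel)"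
    by (rule PR.borel_measurable_nn_integral) measurable
  then show ?thesis unfolding \<psi>n_def .
qed

lemma \<psi>n_le1: "\<psi>n Ss y a \<le> 1"
proof -
  interpret PR: prob_space \<mu>R by (rule probs)
  have "\<psi>n Ss y a \<le> (\<integral>\<^sup>+r. 1 \<partial>\<mu>R)" unfolding \<psi>n_def
    by (rule nn_integral_mono) (auto simp: indicator_def)
  also have "\<dots> = 1" using PR.emeasure_space_1 by simp
  finally show ?thesis .
qed

lemma \<psi>_ennreal: "ennreal (\<psi> Ss y a) = \<psi>n Ss y a"
  unfolding \<psi>_def using \<psi>n_le1[of Ss y a]
  by (simp add: ennreal_enn2real_if top_unique) (metis ennreal_one_less_top not_le top.extremum_strict)

lemma \<psi>_bounds: "0 \<le> \<psi> Ss y a" "\<psi> Ss y a \<le> 1"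
  unfolding \<psi>_def using \<psi>n_le1[of Ss y a]
  by (auto simp: enn2real_leI)

lemma \<psi>_meas[measurable]:
  assumes [measurable]: "Ss \<in> sets borel"
  shows "(\<lambda>p. \<psi> Ss (fst p) (snd p)) \<in> borel_measurable (borel \<Otimes>\<^sub>M borel)"
  unfolding \<psi>_def by measurable

lemma \<psi>_meas2[measurable]:
  assumes [measurable]: "Ss \<in> sets borel" and [measurable]: "f \<in> borel_measurable N" "g \<in> borel_measurable N"
  shows "(\<lambda>x. \<psi> Ss (f x) (g x)) \<in> borel_measurable N"
proof -
  have "(\<lambda>p. \<psi> Ss (fst p) (snd p)) \<circ> (\<lambda>x. (f x, g x)) \<in> borel_measurable N"
    by (rule measurable_comp[of _ _ "borel \<Otimes>\<^sub>M borel"]) auto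
  then show ?thesis by (simp add: comp_def)
qed

lemma subalgF: "subalgebra M FF"
proof -
  have "sets FF \<subseteq> sets M" by (rule sets_image_in_sets) auto
  then show ?thesis unfolding subalgebra_def by auto
qed

lemma sfs: "sigma_finite_subalgebra M FF"
  by (rule finite_measure_subalgebra_is_sigma_finite) (simp add: finite_measure_subalgebra_def finite_measure_subalgebra_axioms_def subalgF finite_measure_axioms)

lemma YF[measurable]: "Y \<in> measurable FF borel"
  by (rule measurable_vimage_algebra1) auto

lemma setsF: "C \<in> sets FF \<Longrightarrow> \<exists>B \<in> sets borel. C = Y -` B \<inter> space M"
  by (subst (asm) sets_vimage_algebra2) auto

end

context cisetup2 begin

lemma \<psi>n_meas3[measurable]:
  assumes [measurable]: "Ss \<in> sets borel" and [measurable]: "f \<in> borel_measurable N" "g \<in> borel_measurable N"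
  shows "(\<lambda>x. \<psi>n Ss (f x) (g x)) \<in> borel_measurable N"
proof -
  have "(\<lambda>p. \<psi>n Ss (fst p) (snd p)) \<circ> (\<lambda>x. (f x, g x)) \<in> borel_measurable N"
    by (rule measurable_comp[of _ _ "borel \<Otimes>\<^sub>M borel"]) auto
  then show ?thesis by (simp add: comp_def)
qed

lemma K:
  assumes [measurable]: "Ss \<in> sets borel" "T \<in> sets borel" and C: "C \<in> sets FF"
  shows "(\<integral>\<omega>\<in>C. indicator Ss (Yh \<omega>) * indicator T (A \<omega>) \<partial>M) = (\<integral>\<omega>\<in>C. indicator T (A \<omega>) * \<psi> Ss (Y \<omega>) (A \<omega>) \<partial>M)"
proof -
  obtain B where B[measurable]: "B \<in> sets borel" and CB: "C = Y -` B \<inter> space M" using setsF[OF C] by blast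
  have Cm[measurable]: "C \<in> sets M" unfolding CB by measurable
  define G1 where "G1 = (\<lambda>(a::real, s::real, r::real). indicator B (k * a + s) * indicator T a * indicator Ss (\<beta> * l * (k * a + s) + \<gamma> * a + \<beta> * r) :: ennreal)"
  define G2 where "G2 = (\<lambda>(a::real, s::real, r::real). indicator B (k * a + s) * indicator T a * \<psi>n Ss (k * a + s) a)"
  have G1m[measurable]: "G1 \<in> borel_measurable (borel \<Otimes>\<^sub>M (borel \<Otimes>\<^sub>M borel))" unfolding G1_def by measurable
  have G2m[measurable]: "G2 \<in> borel_measurable (borel \<Otimes>\<^sub>M (borel \<Otimes>\<^sub>M borel))" unfolding G2_def by measurable
  interpret PR: prob_space \<mu>R by (rule probs)
  have L: "(\<integral>\<^sup>+\<omega>. ennreal (indicator C \<omega> *\<^sub>R (indicator Ss (Yh \<omega>) * indicator T (A \<omega>))) \<partial>M) = (\<integral>\<^sup>+\<omega>. G1 (A \<omega>, S \<omega>, R \<omega>) \<partial>M)"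
    by (rule nn_integral_cong) (auto simp: G1_def CB Y_def Yh_def indicator_def)
  have Rr: "(\<integral>\<^sup>+\<omega>. ennreal (indicator C \<omega> *\<^sub>R (indicator T (A \<omega>) * \<psi> Ss (Y \<omega>) (A \<omega>))) \<partial>M) = (\<integral>\<^sup>+\<omega>. G2 (A \<omega>, S \<omega>, R \<omega>) \<partial>M)"
    by (rule nn_integral_cong) (auto simp: G2_def CB Y_def indicator_def \<psi>_ennreal)
  have eq: "(\<integral>\<^sup>+\<omega>. G1 (A \<omega>, S \<omega>, R \<omega>) \<partial>M) = (\<integral>\<^sup>+\<omega>. G2 (A \<omega>, S \<omega>, R \<omega>) \<partial>M)"
    unfolding triple[OF G1m] triple[OF G2m]
  proof (rule nn_integral_cong, rule nn_integral_cong)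
    fix a s :: real
    have "(\<integral>\<^sup>+r. G1 (a, s, r) \<partial>\<mu>R) = indicator B (k * a + s) * indicator T a * \<psi>n Ss (k * a + s) a"
      unfolding G1_def \<psi>n_def by (simp add: nn_integral_cmult)
    also have "\<dots> = (\<integral>\<^sup>+r. G2 (a, s, r) \<partial>\<mu>R)"
      unfolding G2_def using PR.emeasure_space_1 by simp
    finally show "(\<integral>\<^sup>+r. G1 (a, s, r) \<partial>\<mu>R) = (\<integral>\<^sup>+r. G2 (a, s, r) \<partial>\<mu>R)" .
  qed
  have m1: "(\<lambda>\<omega>. indicator C \<omega> *\<^sub>R (indicator Ss (Yh \<omega>) * indicator T (A \<omega>) :: real)) \<in> borel_measurable M"
    by measurable
  have m2: "(\<lambda>\<omega>. indicator C \<omega> *\<^sub>R (indicator T (A \<omega>) * \<psi> Ss (Y \<omega>) (A \<omega>))) \<in> borel_measurable M"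
    by measurable
  have p2: "AE \<omega> in M. 0 \<le> indicator C \<omega> *\<^sub>R (indicator T (A \<omega>) * \<psi> Ss (Y \<omega>) (A \<omega>))"
    using \<psi>_bounds by simp
  show ?thesis unfolding set_lebesgue_integral_def
    using integral_eq_nn_integral[OF m1] integral_eq_nn_integral[OF m2 p2] L Rr eq by simp
qed

end

context cisetup2 begin

lemma ci_if:
  assumes g0: "\<gamma> = 0"
  shows "cond_indep_given M Yh A Y"
  unfolding cond_indep_given_def
proof (intro ballI)
  fix Ss T :: "real set" assume Ssm[measurable]: "Ss \<in> sets borel" and Tm[measurable]: "T \<in> sets borel"
  interpret sigma_finite_subalgebra M FF by (rule sfs)
  define \<phi> where "\<phi> y = \<psi> Ss y 0" for y
  have \<psi>\<phi>: "\<psi> Ss y a = \<phi> y" for y a unfolding \<phi>_def \<psi>_def \<psi>n_def using g0 by simp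
  have \<phi>m[measurable]: "\<phi> \<in> borel_measurable borel" unfolding \<phi>_def by measurable
  have \<phi>b: "0 \<le> \<phi> y" "\<phi> y \<le> 1" for y unfolding \<phi>_def using \<psi>_bounds by auto
  have \<phi>YF[measurable]: "(\<lambda>x. \<phi> (Y x)) \<in> borel_measurable FF" by measurable
  have int1: "integrable M (\<lambda>x. indicator Ss (Yh x) * indicator T (A x) :: real)"
    by (rule integrable_const_bound[where B=1]) (auto simp: indicator_def)
  have int2: "integrable M (\<lambda>x. \<phi> (Y x) * indicator T (A x))"
    by (rule integrable_const_bound[where B=1]) (auto simp: indicator_def \<phi>b abs_le_iff intro: order_trans[OF _ \<phi>b(2)])
  have inth: "integrable M (\<lambda>x. indicator Ss (Yh x) :: real)"
    by (rule integrable_const_bound[where B=1]) (auto simp: indicator_def)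
  have int\<phi>: "integrable M (\<lambda>x. \<phi> (Y x))"
    by (rule integrable_const_bound[where B=1]) (auto simp: \<phi>b abs_le_iff intro: order_trans[OF _ \<phi>b(2)])
  have a: "AE x in M. real_cond_exp M FF (\<lambda>x. indicator Ss (Yh x) * indicator T (A x)) x
      = real_cond_exp M FF (\<lambda>x. \<phi> (Y x) * indicator T (A x)) x"
  proof (rule real_cond_exp_charact)
    fix C assume C: "C \<in> sets FF"
    have "(\<integral>x\<in>C. indicator Ss (Yh x) * indicator T (A x) \<partial>M) = (\<integral>x\<in>C. indicator T (A x) * \<psi> Ss (Y x) (A x) \<partial>M)"
      by (rule K) (auto simp: C)
    also have "\<dots> = (\<integral>x\<in>C. \<phi> (Y x) * indicator T (A x) \<partial>M)" by (simp add: \<psi>\<phi> mult.commute)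
    also have "\<dots> = (\<integral>x\<in>C. real_cond_exp M FF (\<lambda>x. \<phi> (Y x) * indicator T (A x)) x \<partial>M)"
      by (rule real_cond_exp_intA[OF int2 C])
    finally show "(\<integral>x\<in>C. indicator Ss (Yh x) * indicator T (A x) \<partial>M) = (\<integral>x\<in>C. real_cond_exp M FF (\<lambda>x. \<phi> (Y x) * indicator T (A x)) x \<partial>M)" .
  qed (auto simp: int1 int2 intro: real_cond_exp_int)
  have b: "AE x in M. real_cond_exp M FF (\<lambda>x. \<phi> (Y x) * indicator T (A x)) x = \<phi> (Y x) * real_cond_exp M FF (\<lambda>x. indicator T (A x)) x"
    by (rule real_cond_exp_mult) (auto simp: int2)
  have c: "AE x in M. real_cond_exp M FF (\<lambda>x. indicator Ss (Yh x)) x = \<phi> (Y x)"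
  proof (rule real_cond_exp_charact)
    fix C assume C: "C \<in> sets FF"
    have "(\<integral>x\<in>C. (indicator Ss (Yh x) :: real) \<partial>M) = (\<integral>x\<in>C. indicator Ss (Yh x) * (indicator UNIV (A x) :: real) \<partial>M)" by simp
    also have "\<dots> = (\<integral>x\<in>C. indicator UNIV (A x) * \<psi> Ss (Y x) (A x) \<partial>M)"
      by (rule K) (auto simp: C)
    also have "\<dots> = (\<integral>x\<in>C. \<phi> (Y x) \<partial>M)" by (simp add: \<psi>\<phi>)
    finally show "(\<integral>x\<in>C. indicator Ss (Yh x) \<partial>M) = (\<integral>x\<in>C. \<phi> (Y x) \<partial>M)" .
  qed (auto simp: inth int\<phi>)
  from a b c show "AE \<omega> in M. real_cond_exp M FF (\<lambda>x. indicator Ss (Yh x) * indicator T (A x)) \<omega>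
      = real_cond_exp M FF (\<lambda>x. indicator Ss (Yh x)) \<omega> * real_cond_exp M FF (\<lambda>x. indicator T (A x)) \<omega>"
    by eventually_elim simp
qed

end


context prob_space begin

lemma normal_interval_pos:
  assumes Z: "distributed M lborel Z (\<lambda>x. ennreal (normal_density m s x))" and s: "s > 0" and uv: "u < v"
  shows "prob {\<omega> \<in> space M. u < Z \<omega> \<and> Z \<omega> \<le> v} > 0"
proof -
  have Zm[measurable]: "Z \<in> borel_measurable M" using Z by (auto simp: distributed_def)
  have nz: "normal_density m s x \<noteq> 0" for x using normal_density_pos[OF s, of m x] by simp
  have e: "emeasure M (Z -` {u<..v} \<inter> space M) = (\<integral>\<^sup>+x. ennreal (normal_density m s x) * indicator {u<..v} x \<partial>lborel)"
    by (rule distributed_emeasure[OF Z]) simp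
  have "(\<integral>\<^sup>+x. ennreal (normal_density m s x) * indicator {u<..v} x \<partial>lborel) \<noteq> 0"
  proof
    assume "(\<integral>\<^sup>+x. ennreal (normal_density m s x) * indicator {u<..v} x \<partial>lborel) = 0"
    then have "AE x in lborel. ennreal (normal_density m s x) * indicator {u<..v} x = 0"
      by (subst (asm) nn_integral_0_iff_AE) auto
    then have "AE x in lborel. x \<notin> {u<..v}"
      by eventually_elim (auto simp: indicator_def nz)
    then have "{u<..v} \<in> null_sets lborel" by (subst AE_iff_null_sets) auto
    then show False using uv by (auto simp: null_sets_def)
  qed
  then have "emeasure M (Z -` {u<..v} \<inter> space M) \<noteq> 0" using e by simp
  moreover have "Z -` {u<..v} \<inter> space M = {\<omega> \<in> space M. u < Z \<omega> \<and> Z \<omega> \<le> v}" by auto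
  ultimately show ?thesis
    by (metis emeasure_eq_measure ennreal_0 measure_nonneg order_le_less)
qed

lemma normal_translate_pos:
  assumes Z: "distributed M lborel Z (\<lambda>x. ennreal (normal_density m s x))" and s: "s > 0"
    and X[measurable]: "X \<in> sets borel" and Xn: "emeasure lborel X \<noteq> 0"
  shows "(\<integral>\<^sup>+z. indicator X (t + z) \<partial>distr M borel Z) \<noteq> 0"
proof
  have Zm[measurable]: "Z \<in> borel_measurable M" using Z by (auto simp: distributed_def)
  have nz: "normal_density m s x \<noteq> 0" for x using normal_density_pos[OF s, of m x] by simp
  assume "(\<integral>\<^sup>+z. indicator X (t + z) \<partial>distr M borel Z) = 0"
  then have "(\<integral>\<^sup>+\<omega>. indicator X (t + Z \<omega>) \<partial>M) = 0" by (subst (asm) nn_integral_distr) auto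
  then have "(\<integral>\<^sup>+x. ennreal (normal_density m s x) * indicator X (t + x) \<partial>lborel) = 0"
    by (subst distributed_nn_integral[OF Z]) auto
  then have "AE x in lborel. ennreal (normal_density m s x) * indicator X (t + x) = 0"
    by (subst (asm) nn_integral_0_iff_AE) auto
  then have "AE x in lborel. (indicator X (t + x) :: ennreal) = 0"
    by eventually_elim (auto simp: indicator_def nz)
  then have "(\<integral>\<^sup>+x. indicator X (t + 1 * x) \<partial>lborel) = 0"
    by (subst nn_integral_0_iff_AE) auto
  moreover have "emeasure lborel X = (\<integral>\<^sup>+x. indicator X (t + 1 * x) \<partial>lborel)"
    using nn_integral_real_affine[where c=1 and t=t and f="indicator X"] by simp
  ultimately show False using Xn by simp
qed

end

context cisetup begin

lemma normal_comb:
  assumes a: "a \<noteq> 0" and b: "b \<noteq> 0"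
  shows "\<exists>m s. s > 0 \<and> distributed M lborel (\<lambda>\<omega>. a * XE \<omega> + b * E \<omega>) (\<lambda>x. ennreal (normal_density m s x))"
proof -
  have d1: "distributed M lborel (\<lambda>x. 0 + a * XE x) (\<lambda>x. ennreal (normal_density (0 + a * \<mu>1) (\<bar>a\<bar> * \<sigma>1) x))"
    by (rule normal_density_affine[OF nX]) (use pos1 a in auto)
  have d2: "distributed M lborel (\<lambda>x. 0 + b * E x) (\<lambda>x. ennreal (normal_density (0 + b * \<mu>2) (\<bar>b\<bar> * \<sigma>2) x))"
    by (rule normal_density_affine[OF nE]) (use pos2 b in auto)
  have ind: "indep_var borel (\<lambda>x. 0 + a * XE x) borel (\<lambda>x. 0 + b * E x)"
    using indep_var_compose[OF indXE, of "\<lambda>x. 0 + a * x" borel "\<lambda>x. 0 + b * x" borel]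
    by (simp add: comp_def)
  have dd: "distributed M lborel (\<lambda>x. (0 + a * XE x) + (0 + b * E x))
     (\<lambda>x. ennreal (normal_density (0 + a * \<mu>1 + (0 + b * \<mu>2)) (sqrt ((\<bar>a\<bar> * \<sigma>1)\<^sup>2 + (\<bar>b\<bar> * \<sigma>2)\<^sup>2)) x))"
    by (rule add_indep_normal[OF ind _ _ d1 d2]) (use pos1 pos2 a b in auto)
  have fe: "(\<lambda>x. (0 + a * XE x) + (0 + b * E x)) = (\<lambda>\<omega>. a * XE \<omega> + b * E \<omega>)" by simp
  have sp: "sqrt ((\<bar>a\<bar> * \<sigma>1)\<^sup>2 + (\<bar>b\<bar> * \<sigma>2)\<^sup>2) > 0"
    using pos1 a by (intro real_sqrt_gt_zero add_pos_nonneg) auto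
  show ?thesis
    by (rule exI, rule exI, rule conjI[OF sp]) (use dd[unfolded fe] in assumption)
qed

lemma S_normal: "\<exists>m s. s > 0 \<and> distributed M lborel S (\<lambda>x. ennreal (normal_density m s x))"
proof -
  have fe: "(\<lambda>\<omega>. c * XE \<omega> + 1 * E \<omega>) = S" unfolding S_def by simp
  show ?thesis using normal_comb[OF c_nz one_neq_zero] unfolding fe .
qed

lemma mid_point: "\<exists>t. 0 < measure \<mu>A {..t} \<and> 0 < measure \<mu>A {t<..}"
proof -
  interpret RD: real_distribution \<mu>A by simp
  have fAm[measurable]: "fA \<in> borel_measurable borel" using A_dens by (auto simp: distributed_def)
  have atom: "measure \<mu>A {x} = 0" for x
  proof -
    have "emeasure \<mu>A {x} = emeasure M (A -` {x} \<inter> space M)" by (simp add: emeasure_distr)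
    also have "\<dots> = (\<integral>\<^sup>+y. fA y * indicator {x} y \<partial>lborel)" by (rule distributed_emeasure[OF A_dens]) simp
    also have "\<dots> = 0"
    proof -
      have "AE y in lborel. fA y * indicator {x} y = 0"
        using AE_lborel_singleton[of x] by eventually_elim auto
      then show ?thesis by (subst nn_integral_0_iff_AE) auto
    qed
    finally show ?thesis by (simp add: measure_def)
  qed
  have cont: "isCont (cdf \<mu>A) x" for x using atom RD.isCont_cdf by simp
  obtain a where a: "cdf \<mu>A a < 1/2"
    using order_tendstoD(2)[OF RD.cdf_lim_at_bot, of "1/2"] by (auto simp: eventually_at_bot_linorder)
  obtain b where b: "cdf \<mu>A b > 1/2"
    using order_tendstoD(1)[OF RD.cdf_lim_at_top_prob, of "1/2"] by (auto simp: eventually_at_top_linorder)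
  have ab: "a \<le> b"
  proof (rule ccontr)
    assume "\<not> a \<le> b"
    then have "cdf \<mu>A b \<le> cdf \<mu>A a" by (intro RD.cdf_nondecreasing) simp
    with a b show False by simp
  qed
  obtain t where t: "cdf \<mu>A t = 1/2"
    using IVT'[of "cdf \<mu>A" a "1/2" b] a b ab cont by (auto intro!: continuous_at_imp_continuous_on)
  have "measure \<mu>A {..t} = 1/2" using t by (simp add: cdf_def)
  moreover have "measure \<mu>A {t<..} = 1 - measure \<mu>A {..t}"
  proof -
    have "{t<..} = space \<mu>A - {..t}" by auto
    moreover have "RD.prob (space \<mu>A - {..t}) = 1 - RD.prob {..t}" by (rule RD.prob_compl) simp
    ultimately show ?thesis by simp
  qed
  ultimately have "0 < measure \<mu>A {..t} \<and> 0 < measure \<mu>A {t<..}" by simp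
  then show ?thesis by blast
qed

end


context cisetup2 begin

lemma W_normal: "\<exists>m s. s > 0 \<and> distributed M lborel (\<lambda>\<omega>. \<beta> * R \<omega>) (\<lambda>x. ennreal (normal_density m s x))"
proof -
  have "\<beta> * (1 - l * c) \<noteq> 0" "- (\<beta> * l) \<noteq> 0" using beta_nz one_lc_nz l_nz by auto
  from normal_comb[OF this] obtain m s where "s > 0"
    "distributed M lborel (\<lambda>\<omega>. \<beta> * (1 - l * c) * XE \<omega> + - (\<beta> * l) * E \<omega>) (\<lambda>x. ennreal (normal_density m s x))"
    by blast
  moreover have "(\<lambda>\<omega>. \<beta> * (1 - l * c) * XE \<omega> + - (\<beta> * l) * E \<omega>) = (\<lambda>\<omega>. \<beta> * R \<omega>)"
    by (auto simp: R_def algebra_simps)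
  ultimately show ?thesis by auto
qed

lemma \<psi>_prob:
  assumes [measurable]: "Ss \<in> sets borel"
  shows "\<psi> Ss y a = prob {\<omega> \<in> space M. \<beta> * l * y + \<gamma> * a + \<beta> * R \<omega> \<in> Ss}"
proof -
  have "\<psi>n Ss y a = (\<integral>\<^sup>+\<omega>. indicator Ss (\<beta> * l * y + \<gamma> * a + \<beta> * R \<omega>) \<partial>M)"
    unfolding \<psi>n_def by (subst nn_integral_distr) auto
  also have "\<dots> = emeasure M ((\<lambda>\<omega>. \<beta> * l * y + \<gamma> * a + \<beta> * R \<omega>) -` Ss \<inter> space M)"
    by (rule emeasure_ind_int[where N=borel, symmetric]) auto
  also have "(\<lambda>\<omega>. \<beta> * l * y + \<gamma> * a + \<beta> * R \<omega>) -` Ss \<inter> space M = {\<omega> \<in> space M. \<beta> * l * y + \<gamma> * a + \<beta> * R \<omega> \<in> Ss}"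
    by auto
  finally show ?thesis unfolding \<psi>_def by (simp add: measure_def)
qed

definition "SS = (if \<gamma> > 0 then {..0::real} else {0<..})"

lemma SS_borel[measurable]: "SS \<in> sets borel" unfolding SS_def by auto

lemma mono_strict:
  assumes gnz: "\<gamma> \<noteq> 0" and aa: "a < a'"
  shows "\<psi> SS y a' < \<psi> SS y a"
proof -
  obtain m s where s: "s > 0" and W: "distributed M lborel (\<lambda>\<omega>. \<beta> * R \<omega>) (\<lambda>x. ennreal (normal_density m s x))"
    using W_normal by blast
  define b0 where "b0 = \<beta> * l * y"
  have ev[measurable]: "{\<omega> \<in> space M. P (\<beta> * R \<omega>)} \<in> sets M" if [measurable]: "Measurable.pred borel P" for P
    by measurable
  show ?thesis
  proof (cases "\<gamma> > 0")
    case True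
    let ?t = "- (b0 + \<gamma> * a)" and ?t' = "- (b0 + \<gamma> * a')"
    have tt: "?t' < ?t" using True aa by (simp add: mult_strict_left_mono)
    have e1: "\<psi> SS y a = prob {\<omega> \<in> space M. \<beta> * R \<omega> \<le> ?t}"
      unfolding \<psi>_prob[OF SS_borel] using True by (intro arg_cong[where f=prob]) (auto simp: SS_def b0_def)
    have e2: "\<psi> SS y a' = prob {\<omega> \<in> space M. \<beta> * R \<omega> \<le> ?t'}"
      unfolding \<psi>_prob[OF SS_borel] using True by (intro arg_cong[where f=prob]) (auto simp: SS_def b0_def)
    have "prob ({\<omega> \<in> space M. \<beta> * R \<omega> \<le> ?t} - {\<omega> \<in> space M. \<beta> * R \<omega> \<le> ?t'})
        = prob {\<omega> \<in> space M. \<beta> * R \<omega> \<le> ?t} - prob {\<omega> \<in> space M. \<beta> * R \<omega> \<le> ?t'}"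
      by (rule finite_measure_Diff) (use tt in auto)
    moreover have "{\<omega> \<in> space M. \<beta> * R \<omega> \<le> ?t} - {\<omega> \<in> space M. \<beta> * R \<omega> \<le> ?t'} = {\<omega> \<in> space M. ?t' < \<beta> * R \<omega> \<and> \<beta> * R \<omega> \<le> ?t}"
      by auto
    moreover have "prob {\<omega> \<in> space M. ?t' < \<beta> * R \<omega> \<and> \<beta> * R \<omega> \<le> ?t} > 0"
      by (rule normal_interval_pos[OF W s tt])
    ultimately show ?thesis unfolding e1 e2 by simp
  next
    case False
    then have gneg: "\<gamma> < 0" using gnz by simp
    let ?t = "- (b0 + \<gamma> * a)" and ?t' = "- (b0 + \<gamma> * a')"
    have tt: "?t < ?t'" using gneg aa by (simp add: mult_strict_left_mono_neg)
    have e1: "\<psi> SS y a = prob {\<omega> \<in> space M. ?t < \<beta> * R \<omega>}"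
      unfolding \<psi>_prob[OF SS_borel] using False by (intro arg_cong[where f=prob]) (auto simp: SS_def b0_def)
    have e2: "\<psi> SS y a' = prob {\<omega> \<in> space M. ?t' < \<beta> * R \<omega>}"
      unfolding \<psi>_prob[OF SS_borel] using False by (intro arg_cong[where f=prob]) (auto simp: SS_def b0_def)
    have "prob ({\<omega> \<in> space M. ?t < \<beta> * R \<omega>} - {\<omega> \<in> space M. ?t' < \<beta> * R \<omega>})
        = prob {\<omega> \<in> space M. ?t < \<beta> * R \<omega>} - prob {\<omega> \<in> space M. ?t' < \<beta> * R \<omega>}"
      by (rule finite_measure_Diff) (use tt in auto)
    moreover have "{\<omega> \<in> space M. ?t < \<beta> * R \<omega>} - {\<omega> \<in> space M. ?t' < \<beta> * R \<omega>} = {\<omega> \<in> space M. ?t < \<beta> * R \<omega> \<and> \<beta> * R \<omega> \<le> ?t'}"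
      by auto
    moreover have "prob {\<omega> \<in> space M. ?t < \<beta> * R \<omega> \<and> \<beta> * R \<omega> \<le> ?t'} > 0"
      by (rule normal_interval_pos[OF W s tt])
    ultimately show ?thesis unfolding e1 e2 by simp
  qed
qed

lemma mono_le:
  assumes gnz: "\<gamma> \<noteq> 0" and aa: "a \<le> a'"
  shows "\<psi> SS y a' \<le> \<psi> SS y a"
  using mono_strict[OF gnz, of a a' y] aa by (cases "a = a'") auto

end


context cisetup2 begin

lemma Zlem:
  assumes ci: "cond_indep_given M Yh A Y" and Ssb[measurable]: "Ss \<in> sets borel"
    and Tb[measurable]: "T \<in> sets borel" and C: "C \<in> sets FF"
  shows "(\<integral>x. indicator C x * indicator T (A x) * (\<psi> Ss (Y x) (A x) - real_cond_exp M FF (\<lambda>x. indicator Ss (Yh x)) x) \<partial>M) = 0"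
proof -
  interpret sigma_finite_subalgebra M FF by (rule sfs)
  have Cm[measurable]: "C \<in> sets M" using C subalgF by (auto simp: subalgebra_def)
  define \<pi> where "\<pi> = real_cond_exp M FF (\<lambda>x. indicator Ss (Yh x))"
  define cg where "cg = real_cond_exp M FF (\<lambda>x. indicator T (A x) :: real)"
  have \<pi>F[measurable]: "\<pi> \<in> borel_measurable FF" unfolding \<pi>_def by simp
  have \<pi>M[measurable]: "\<pi> \<in> borel_measurable M" unfolding \<pi>_def by simp
  have cgM[measurable]: "cg \<in> borel_measurable M" unfolding cg_def by simp
  have inth: "integrable M (\<lambda>x. indicator Ss (Yh x) :: real)"
    by (rule integrable_const_bound[where B=1]) (auto simp: indicator_def)
  have inthg: "integrable M (\<lambda>x. indicator Ss (Yh x) * indicator T (A x) :: real)"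
    by (rule integrable_const_bound[where B=1]) (auto simp: indicator_def)
  have int\<pi>: "integrable M \<pi>" unfolding \<pi>_def by (rule real_cond_exp_int(1)[OF inth])
  have int\<pi>2: "integrable M (\<lambda>x. indicator C x * \<pi> x * indicator T (A x))"
    by (rule Bochner_Integration.integrable_bound[OF int\<pi>]) (auto simp: indicator_def)
  have int\<psi>: "integrable M (\<lambda>x. indicator C x * (indicator T (A x) * \<psi> Ss (Y x) (A x)))"
    by (rule integrable_const_bound[where B=1]) (auto simp: indicator_def \<psi>_bounds abs_le_iff intro: order_trans[OF _ \<psi>_bounds(2)])
  have AEci: "AE x in M. real_cond_exp M FF (\<lambda>x. indicator Ss (Yh x) * indicator T (A x)) x = \<pi> x * cg x"
    using ci Ssb Tb unfolding cond_indep_given_def \<pi>_def cg_def by blast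
  have "(\<integral>x\<in>C. indicator Ss (Yh x) * indicator T (A x) \<partial>M) = (\<integral>x\<in>C. real_cond_exp M FF (\<lambda>x. indicator Ss (Yh x) * indicator T (A x)) x \<partial>M)"
    by (rule real_cond_exp_intA[OF inthg C])
  also have "\<dots> = (\<integral>x. (indicator C x * \<pi> x) * cg x \<partial>M)"
    unfolding set_lebesgue_integral_def
  proof (rule integral_cong_AE)
    show "(\<lambda>x. indicator C x *\<^sub>R real_cond_exp M FF (\<lambda>x. indicator Ss (Yh x) * indicator T (A x)) x) \<in> borel_measurable M"
      by (intro borel_measurable_scaleR borel_measurable_indicator Cm borel_measurable_cond_exp2)
    show "(\<lambda>x. indicator C x * \<pi> x * cg x) \<in> borel_measurable M" by measurable
    show "AE x in M. indicator C x *\<^sub>R real_cond_exp M FF (\<lambda>x. indicator Ss (Yh x) * indicator T (A x)) x = indicator C x * \<pi> x * cg x"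
      using AEci by eventually_elim auto
  qed
  also have "\<dots> = (\<integral>x. (indicator C x * \<pi> x) * indicator T (A x) \<partial>M)"
    unfolding cg_def by (rule real_cond_exp_intg(2)) (use int\<pi>2 C \<pi>F in \<open>auto intro!: borel_measurable_times borel_measurable_indicator\<close>)
  finally have e1: "(\<integral>x\<in>C. indicator Ss (Yh x) * indicator T (A x) \<partial>M) = (\<integral>x. indicator C x * \<pi> x * indicator T (A x) \<partial>M)" .
  have e2: "(\<integral>x\<in>C. indicator Ss (Yh x) * indicator T (A x) \<partial>M) = (\<integral>x. indicator C x * (indicator T (A x) * \<psi> Ss (Y x) (A x)) \<partial>M)"
    using K[OF Ssb Tb C] by (simp add: set_lebesgue_integral_def)
  have "(\<integral>x. indicator C x * indicator T (A x) * (\<psi> Ss (Y x) (A x) - \<pi> x) \<partial>M)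
      = (\<integral>x. indicator C x * (indicator T (A x) * \<psi> Ss (Y x) (A x)) - indicator C x * \<pi> x * indicator T (A x) \<partial>M)"
    by (rule Bochner_Integration.integral_cong) (auto simp: algebra_simps)
  also have "\<dots> = (\<integral>x. indicator C x * (indicator T (A x) * \<psi> Ss (Y x) (A x)) \<partial>M) - (\<integral>x. indicator C x * \<pi> x * indicator T (A x) \<partial>M)"
    by (rule Bochner_Integration.integral_diff[OF int\<psi> int\<pi>2])
  also have "\<dots> = 0" using e1 e2 by simp
  finally show ?thesis unfolding \<pi>_def .
qed

end

context cisetup2 begin

lemma null_or:
  assumes Tb[measurable]: "Tset \<in> sets borel" and Bb[measurable]: "B' \<in> sets borel"
    and AE0: "AE x in M. \<not> (A x \<in> Tset \<and> Y x \<in> B')"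
  shows "emeasure \<mu>A Tset = 0 \<or> emeasure lborel B' = 0"
proof (rule disjCI)
  assume nz: "emeasure lborel B' \<noteq> 0"
  obtain m s where s: "s > 0" and dS: "distributed M lborel S (\<lambda>x. ennreal (normal_density m s x))"
    using S_normal by blast
  interpret PR: prob_space \<mu>R by (rule probs)
  interpret PS: prob_space \<mu>S by (rule probs)
  define g where "g = (\<lambda>(a::real, s::real, r::real). indicator Tset a * indicator B' (k * a + s) :: ennreal)"
  have gm[measurable]: "g \<in> borel_measurable (borel \<Otimes>\<^sub>M (borel \<Otimes>\<^sub>M borel))" unfolding g_def by measurable
  define I where "I a = (\<integral>\<^sup>+s. indicator B' (k * a + s) \<partial>\<mu>S)" for a
  have Im[measurable]: "I \<in> borel_measurable borel" unfolding I_def by measurable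
  have "(\<integral>\<^sup>+\<omega>. g (A \<omega>, S \<omega>, R \<omega>) \<partial>M) = 0"
  proof (subst nn_integral_0_iff_AE)
    show "(\<lambda>\<omega>. g (A \<omega>, S \<omega>, R \<omega>)) \<in> borel_measurable M" by measurable
    show "AE \<omega> in M. g (A \<omega>, S \<omega>, R \<omega>) = 0"
      using AE0 by eventually_elim (auto simp: g_def Y_def indicator_def)
  qed
  moreover have "(\<integral>\<^sup>+\<omega>. g (A \<omega>, S \<omega>, R \<omega>) \<partial>M) = (\<integral>\<^sup>+a. indicator Tset a * I a \<partial>\<mu>A)"
    unfolding triple[OF gm]
  proof (rule nn_integral_cong)
    fix a
    have "(\<integral>\<^sup>+s. \<integral>\<^sup>+r. g (a, s, r) \<partial>\<mu>R \<partial>\<mu>S) = (\<integral>\<^sup>+s. indicator Tset a * indicator B' (k * a + s) \<partial>\<mu>S)"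
      unfolding g_def using PR.emeasure_space_1 by simp
    also have "\<dots> = indicator Tset a * I a" unfolding I_def by (rule nn_integral_cmult) measurable
    finally show "(\<integral>\<^sup>+s. \<integral>\<^sup>+r. g (a, s, r) \<partial>\<mu>R \<partial>\<mu>S) = indicator Tset a * I a" .
  qed
  ultimately have "(\<integral>\<^sup>+a. indicator Tset a * I a \<partial>\<mu>A) = 0" by simp
  then have AEI: "AE a in \<mu>A. indicator Tset a * I a = 0"
    by (subst (asm) nn_integral_0_iff_AE) auto
  have Inz: "I a \<noteq> 0" for a
    unfolding I_def by (rule normal_translate_pos[OF dS s Bb nz])
  from AEI have "AE a in \<mu>A. a \<notin> Tset"
    by eventually_elim (use Inz in \<open>auto simp: indicator_def\<close>)
  then have "Tset \<in> null_sets \<mu>A" by (subst AE_iff_null_sets) auto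
  then show "emeasure \<mu>A Tset = 0" by auto
qed

lemma ci_onlyif:
  assumes ci: "cond_indep_given M Yh A Y" and gnz: "\<gamma> \<noteq> 0"
  shows False
proof -
  interpret sigma_finite_subalgebra M FF by (rule sfs)
  interpret PA: prob_space \<mu>A by (rule probs)
  obtain t where t1: "0 < measure \<mu>A {..t}" and t2: "0 < measure \<mu>A {t<..}" using mid_point by blast
  define \<pi> where "\<pi> = real_cond_exp M FF (\<lambda>x. indicator SS (Yh x))"
  have \<pi>F: "\<pi> \<in> borel_measurable FF" unfolding \<pi>_def by simp
  have \<pi>M[measurable]: "\<pi> \<in> borel_measurable M" unfolding \<pi>_def by simp
  have inth: "integrable M (\<lambda>x. indicator SS (Yh x) :: real)"
    by (rule integrable_const_bound[where B=1]) (auto simp: indicator_def)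
  have int\<pi>: "integrable M \<pi>" unfolding \<pi>_def by (rule real_cond_exp_int(1)[OF inth])
  have int1\<pi>: "integrable M (\<lambda>x. 1 + \<bar>\<pi> x\<bar>)" using int\<pi> by auto
  define Cs where "Cs = {x \<in> space M. \<psi> SS (Y x) t \<le> \<pi> x}"
  have "Cs = {x \<in> space FF. \<psi> SS (Y x) t \<le> \<pi> x}" by (simp add: Cs_def)
  also have "\<dots> \<in> sets FF"
  proof (rule borel_measurable_le)
    show "(\<lambda>x. \<psi> SS (Y x) t) \<in> borel_measurable FF" by measurable
  qed (rule \<pi>F)
  finally have CsF: "Cs \<in> sets FF" .
  have CsM[measurable]: "Cs \<in> sets M" using CsF subalgF by (auto simp: subalgebra_def)
  have ncF: "space M - Cs \<in> sets FF"
  proof -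
    have "space FF - Cs \<in> sets FF" by (rule sets.compl_sets[OF CsF])
    then show ?thesis by simp
  qed
  have intbound: "integrable M (\<lambda>x. indicator C x * indicator T (A x) * (\<psi> SS (Y x) (A x) - \<pi> x))"
    if [measurable]: "C \<in> sets M" "T \<in> sets borel" for C T
  proof (rule Bochner_Integration.integrable_bound[OF int1\<pi>])
    show "(\<lambda>x. indicator C x * indicator T (A x) * (\<psi> SS (Y x) (A x) - \<pi> x)) \<in> borel_measurable M"
      by measurable
    have "norm (indicator C x * indicator T (A x) * (\<psi> SS (Y x) (A x) - \<pi> x)) \<le> norm (1 + \<bar>\<pi> x\<bar>)" for x
      using \<psi>_bounds[of SS "Y x" "A x"] by (auto simp: indicator_def abs_le_iff)
    then show "AE x in M. norm (indicator C x * indicator T (A x) * (\<psi> SS (Y x) (A x) - \<pi> x)) \<le> norm (1 + \<bar>\<pi> x\<bar>)"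
      by simp
  qed
  define h2 where "h2 x = indicator Cs x * indicator {t<..} (A x) * (\<psi> SS (Y x) (A x) - \<pi> x)" for x
  have h2le: "h2 x \<le> 0" for x
  proof (cases "x \<in> Cs \<and> t < A x")
    case True
    then have "\<psi> SS (Y x) (A x) < \<psi> SS (Y x) t" by (intro mono_strict[OF gnz]) auto
    moreover have "\<psi> SS (Y x) t \<le> \<pi> x" using True by (auto simp: Cs_def)
    ultimately show ?thesis using True by (simp add: h2_def)
  qed (auto simp: h2_def)
  have "(\<integral>x. h2 x \<partial>M) = 0" unfolding h2_def \<pi>_def by (rule Zlem[OF ci SS_borel _ CsF]) simp
  then have "(\<integral>x. - h2 x \<partial>M) = 0" by simp
  moreover have "integrable M (\<lambda>x. - h2 x)" unfolding h2_def using intbound[of Cs "{t<..}"] by simp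
  ultimately have "AE x in M. - h2 x = 0"
    using integral_nonneg_eq_0_iff_AE[of M "\<lambda>x. - h2 x"] h2le by simp
  then have AE1: "AE x in M. \<not> (A x \<in> {t<..} \<and> x \<in> Cs)"
  proof eventually_elim
    case (elim x)
    show ?case
    proof
      assume a: "A x \<in> {t<..} \<and> x \<in> Cs"
      then have "\<psi> SS (Y x) (A x) < \<psi> SS (Y x) t" by (intro mono_strict[OF gnz]) auto
      moreover have "\<psi> SS (Y x) t \<le> \<pi> x" using a by (auto simp: Cs_def)
      ultimately show False using elim a by (simp add: h2_def)
    qed
  qed
  define h1 where "h1 x = indicator (space M - Cs) x * indicator {..t} (A x) * (\<psi> SS (Y x) (A x) - \<pi> x)" for x
  have h1ge: "h1 x \<ge> 0" for x
  proof (cases "x \<in> space M - Cs \<and> A x \<le> t")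
    case True
    then have "\<psi> SS (Y x) t \<le> \<psi> SS (Y x) (A x)" by (intro mono_le[OF gnz]) auto
    moreover have "\<pi> x < \<psi> SS (Y x) t" using True by (auto simp: Cs_def)
    ultimately show ?thesis using True by (simp add: h1_def)
  qed (auto simp: h1_def)
  have "(\<integral>x. h1 x \<partial>M) = 0" unfolding h1_def \<pi>_def by (rule Zlem[OF ci SS_borel _ ncF]) simp
  moreover have "integrable M h1" unfolding h1_def using intbound[of "space M - Cs" "{..t}"] by simp
  ultimately have "AE x in M. h1 x = 0"
    using integral_nonneg_eq_0_iff_AE[of M h1] h1ge by simp
  then have AE2: "AE x in M. \<not> (A x \<in> {..t} \<and> x \<in> space M - Cs)"
  proof eventually_elim
    case (elim x)
    show ?case
    proof
      assume a: "A x \<in> {..t} \<and> x \<in> space M - Cs"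
      then have "\<psi> SS (Y x) t \<le> \<psi> SS (Y x) (A x)" by (intro mono_le[OF gnz]) auto
      moreover have "\<pi> x < \<psi> SS (Y x) t" using a by (auto simp: Cs_def)
      ultimately show False using elim a by (simp add: h1_def)
    qed
  qed
  obtain B where Bb[measurable]: "B \<in> sets borel" and CB: "Cs = Y -` B \<inter> space M" using setsF[OF CsF] by blast
  have A1: "AE x in M. \<not> (A x \<in> {t<..} \<and> Y x \<in> B)"
  proof -
    have "AE x in M. x \<in> space M" by simp
    with AE1 show ?thesis by eventually_elim (auto simp: CB)
  qed
  have A2: "AE x in M. \<not> (A x \<in> {..t} \<and> Y x \<in> - B)"
  proof -
    have "AE x in M. x \<in> space M" by simp
    with AE2 show ?thesis by eventually_elim (auto simp: CB)
  qed
  have n1: "emeasure \<mu>A {t<..} \<noteq> 0" using t2 by (simp add: PA.emeasure_eq_measure)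
  have n2: "emeasure \<mu>A {..t} \<noteq> 0" using t1 by (simp add: PA.emeasure_eq_measure)
  have z1: "emeasure lborel B = 0" using null_or[OF _ Bb A1] n1 by auto
  have z2: "emeasure lborel (- B) = 0" using null_or[OF _ _ A2] n2 Bb by auto
  have "emeasure lborel (UNIV :: real set) \<le> emeasure lborel B + emeasure lborel (- B)"
  proof -
    have "emeasure lborel (B \<union> - B) \<le> emeasure lborel B + emeasure lborel (- B)"
      by (rule emeasure_subadditive) auto
    then show ?thesis by simp
  qed
  then show False using z1 z2 by simp
qed

end


theorem mainTheorem2:
  fixes M :: "'a measure"
    and A E_X E_H E_Y :: "'a \<Rightarrow> real"
    and q b c d \<alpha> \<beta> \<mu>1 \<mu>2 \<sigma>EX \<sigma>E :: real
  assumes P: "prob_space M"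
    and indep: "prob_space.indep_vars M (\<lambda>_. borel) (\<lambda>i. [A, E_X, E_H, E_Y] ! i) {0, 1, 2, 3 :: nat}"
    and A_density: "\<exists>f. distributed M lborel A f"
    and c_nz: "c \<noteq> 0"
    and qcbd_nz: "q * c + b * d \<noteq> 0"
    and beta_nz: "\<beta> \<noteq> 0"
    and sEX_pos: "\<sigma>EX > 0"
    and sE_pos: "\<sigma>E > 0"
    and EX_gauss: "distributed M lborel E_X (\<lambda>x. ennreal (normal_density \<mu>1 \<sigma>EX x))"
    and E_gauss: "distributed M lborel (\<lambda>\<omega>. E_Y \<omega> + d * E_H \<omega>)
                    (\<lambda>x. ennreal (normal_density \<mu>2 \<sigma>E x))"
  shows "cond_indep_given M
           (\<lambda>\<omega>. \<alpha> * A \<omega> + \<beta> * (q * A \<omega> + E_X \<omega>))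
           A
           (\<lambda>\<omega>. c * (q * A \<omega> + E_X \<omega>) + d * (b * A \<omega> + E_H \<omega>) + E_Y \<omega>)
         \<longleftrightarrow> \<alpha> / \<beta> = (b * d * c * \<sigma>EX\<^sup>2 - q * \<sigma>E\<^sup>2) / (c\<^sup>2 * \<sigma>EX\<^sup>2 + \<sigma>E\<^sup>2)"
proof -
  interpret prob_space M by (rule P)
  define X where "X = (\<lambda>i. [A, E_X, E_H, E_Y] ! i)"
  define E where "E = (\<lambda>\<omega>. E_Y \<omega> + d * E_H \<omega>)"
  have ind: "indep_vars (\<lambda>_. borel) X {0, 1, 2, 3 :: nat}" using indep unfolding X_def .
  obtain fA where fA: "distributed M lborel A fA" using A_density by blast
  have i1: "indep_var (Pi\<^sub>M {0} (\<lambda>_. borel)) (\<lambda>\<omega>. restrict (\<lambda>i. X i \<omega>) {0})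
                     (Pi\<^sub>M {1,2,3} (\<lambda>_. borel)) (\<lambda>\<omega>. restrict (\<lambda>i. X i \<omega>) {1,2,3})"
    by (rule indep_var_restrict[OF ind]) auto
  have m1: "(\<lambda>f. (f 0, 0::real)) \<in> measurable (Pi\<^sub>M {0::nat} (\<lambda>_. borel)) (borel \<Otimes>\<^sub>M borel)"
    by (intro measurable_Pair measurable_component_singleton measurable_const) auto
  have m2: "(\<lambda>f. (f 1, f 3 + d * f 2)) \<in> measurable (Pi\<^sub>M {1,2,3::nat} (\<lambda>_. borel)) (borel \<Otimes>\<^sub>M borel)"
    by (intro measurable_Pair borel_measurable_add borel_measurable_times measurable_component_singleton measurable_const) auto
  have indAE: "indep_var (borel \<Otimes>\<^sub>M borel) (\<lambda>\<omega>. (A \<omega>, 0::real)) (borel \<Otimes>\<^sub>M borel) (\<lambda>\<omega>. (E_X \<omega>, E \<omega>))"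
    using indep_var_compose[OF i1 m1 m2] by (simp add: comp_def X_def E_def)
  have i2: "indep_var (Pi\<^sub>M {1} (\<lambda>_. borel)) (\<lambda>\<omega>. restrict (\<lambda>i. X i \<omega>) {1})
                     (Pi\<^sub>M {2,3} (\<lambda>_. borel)) (\<lambda>\<omega>. restrict (\<lambda>i. X i \<omega>) {2,3})"
    by (rule indep_var_restrict[OF ind]) auto
  have m3: "(\<lambda>f. f 1) \<in> measurable (Pi\<^sub>M {1::nat} (\<lambda>_. borel)) (borel :: real measure)"
    by (intro measurable_component_singleton) auto
  have m4: "(\<lambda>f. f 3 + d * f 2) \<in> measurable (Pi\<^sub>M {2,3::nat} (\<lambda>_. borel)) (borel :: real measure)"
    by (intro borel_measurable_add borel_measurable_times measurable_component_singleton measurable_const) auto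
  have indXE: "indep_var borel E_X borel E"
    using indep_var_compose[OF i2 m3 m4] by (simp add: comp_def X_def E_def)
  interpret C1: cisetup M A E_X E fA \<mu>1 \<mu>2 \<sigma>EX \<sigma>E c
    by unfold_locales (use indAE indXE EX_gauss E_gauss fA sEX_pos sE_pos c_nz in \<open>auto simp: E_def\<close>)
  define k where "k = q * c + b * d"
  define \<gamma> where "\<gamma> = \<alpha> + \<beta> * q - \<beta> * C1.l * k"
  interpret C2: cisetup2 M A E_X E fA \<mu>1 \<mu>2 \<sigma>EX \<sigma>E c k \<beta> \<gamma>
    by unfold_locales (rule beta_nz)
  have eY: "(\<lambda>\<omega>. c * (q * A \<omega> + E_X \<omega>) + d * (b * A \<omega> + E_H \<omega>) + E_Y \<omega>) = C2.Y"
    unfolding C2.Y_def C1.S_def by (rule ext) (simp add: E_def k_def algebra_simps)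
  have eYh: "(\<lambda>\<omega>. \<alpha> * A \<omega> + \<beta> * (q * A \<omega> + E_X \<omega>)) = C2.Yh"
    unfolding C2.Yh_def C2.Y_def C1.S_def C1.R_def by (rule ext) (simp add: \<gamma>_def E_def algebra_simps)
  have ci: "cond_indep_given M C2.Yh A C2.Y \<longleftrightarrow> \<gamma> = 0"
    using C2.ci_if C2.ci_onlyif by blast
  have lk: "C1.l * k - q = (b * d * c * \<sigma>EX\<^sup>2 - q * \<sigma>E\<^sup>2) / (c\<^sup>2 * \<sigma>EX\<^sup>2 + \<sigma>E\<^sup>2)"
    using C1.DD_pos unfolding C1.l_def C1.DD_def k_def by (simp add: field_simps power2_eq_square)
  have "\<gamma> = 0 \<longleftrightarrow> \<alpha> / \<beta> = C1.l * k - q"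
    using beta_nz unfolding \<gamma>_def by (auto simp: field_simps)
  then show ?thesis unfolding eY eYh ci lk .
qed


end
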